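(* Let $\Lambda$ denote the von Mangoldt function and let $\varepsilon>0$ be a small number. Then, as $x\to\infty$, \[ \sum_{n\leq x} \Lambda\left( [x/n]^2+1 \right) = a_2 x + O\left( x^{(2+\varepsilon)/3}\log^2 x \right), \] where the density constant is \[ a_2=\sum_{n\geq 1}\frac{\Lambda(n^2+1)}{n(n+1)}\geq 0.900076. \]
   Context: $[t]$ denotes the largest integer not exceeding $t$. The von Mangoldt function is $\Lambda(m)=\log p$ if $m=p^k$ for a prime $p$ and an integer $k\geq 1$, and $\Lambda(m)=0$ otherwise. The sum is over positive integers $n\le x$. *)

theory Defs
  imports "HOL-Analysis.Analysis" "HOL-Number_Theory.Number_Theory" "HOL-Library.Landau_Symbols"
begin

definition mangoldt :: "nat \<Rightarrow> real" where
  "mangoldt m = (if primepow m then ln (real (aprimedivisor m)) else 0)"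

definition a2 :: real where
  "a2 = (\<Sum>n. mangoldt ((Suc n)^2 + 1) / (real (Suc n) * real (Suc n + 1)))"

end

theory Submission
  imports Defs "HOL-Real_Asymp.Real_Asymp"
begin


lemma mangoldt_prime: "prime p \<Longrightarrow> mangoldt p = ln (real p)"
  using aprimedivisor_prime_power[of p 1] by (simp add: mangoldt_def)

lemma mangoldt_nonneg: "mangoldt m \<ge> 0"
proof (cases "primepow m")
  case True
  then have "m > Suc 0" by (rule primepow_gt_Suc_0)
  then have "aprimedivisor m > Suc 0" by simp
  then show ?thesis using True by (simp add: mangoldt_def)
qed (simp add: mangoldt_def)

lemma mangoldt_le_ln: "mangoldt m \<le> ln (real m)"
proof (cases "primepow m")
  case True
  then have "m > Suc 0" by (rule primepow_gt_Suc_0)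
  then have "aprimedivisor m > Suc 0" "aprimedivisor m \<le> m" by (simp_all add: aprimedivisor_le_nat)
  then show ?thesis using True by (simp add: mangoldt_def)
next
  case False
  then show ?thesis by (cases "m = 0") (auto simp: mangoldt_def)
qed

definition F :: "nat \<Rightarrow> real" where "F m = mangoldt (m^2 + 1)"

lemma F_nonneg: "F m \<ge> 0" by (simp add: F_def mangoldt_nonneg)

lemma F_le: "F m \<le> 2 * ln (real m + 1)"
proof -
  have "F m \<le> ln (real (m^2+1))" unfolding F_def by (rule mangoldt_le_ln)
  also have "\<dots> \<le> ln ((real m + 1)^2)"
    by (subst ln_le_cancel_iff) (auto simp: power2_eq_square algebra_simps add_pos_nonneg)
  also have "\<dots> = 2 * ln (real m + 1)" by (simp add: ln_realpow)
  finally show ?thesis .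
qed

definition h :: "nat \<Rightarrow> real" where "h m = 2 * (2 + ln (real m)) / real m"

lemma h_nonneg: "h m \<ge> 0"
  unfolding h_def by (cases "m = 0") (auto intro!: divide_nonneg_pos add_nonneg_nonneg)

lemma tele_step:
  assumes "m \<ge> 1"
  shows "F m / (real m * real (m+1)) \<le> h m - h (m+1)"
proof -
  have m: "real m \<ge> 1" using assms by simp
  have l1: "ln (real m + 1) - ln (real m) \<le> 1 / real m"
  proof -
    have q: "1 + 1 / real m = (real m + 1) / real m" using m by (simp add: field_simps)
    have "ln (real m + 1) - ln (real m) = ln (1 + 1 / real m)"
      unfolding q using m by (simp add: ln_div)
    also have "\<dots> \<le> 1 / real m" by (rule ln_add_one_self_le_self) simp
    finally show ?thesis .
  qed
  have l2: "1 / real m \<le> 1" using m by simp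
  have "F m \<le> 2 * ln (real m + 1)" by (rule F_le)
  have key: "2 * ln (real m + 1) \<le> 2 * (2 + ln (real m)) * (real m + 1) - 2 * (2 + ln (real m + 1)) * real m"
  proof -
    have "real m * (ln (real m + 1) - ln (real m)) \<le> 1" using l1 m by (simp add: field_simps)
    then show ?thesis using l1 l2 by (simp add: algebra_simps)
  qed
  have "h m - h (m+1) = (2 * (2 + ln (real m)) * (real m + 1) - 2 * (2 + ln (real m + 1)) * real m) / (real m * (real m + 1))"
    using m by (simp add: h_def field_simps)
  moreover have "F m / (real m * real (m+1)) \<le> (2 * ln (real m + 1)) / (real m * (real m + 1))"
  proof -
    have r: "real (m+1) = real m + 1" by simp
    show ?thesis unfolding r by (intro divide_right_mono F_le) (use m in auto)
  qed
  ultimately show ?thesis using key m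
    by (smt (verit, ccfv_SIG) divide_right_mono mult_nonneg_nonneg of_nat_0_le_iff)
qed

definition u :: "nat \<Rightarrow> real" where "u n = mangoldt ((Suc n)^2 + 1) / (real (Suc n) * real (Suc n + 1))"

lemma u_F: "u n = F (Suc n) / (real (Suc n) * real (Suc n + 1))"
  by (simp add: u_def F_def)

lemma u_alt: "u n = mangoldt ((n+1)^2+1) / (real (n+1) * real (n+2))"
  by (simp add: u_def)

lemma u_nonneg: "u n \<ge> 0" by (simp add: u_def mangoldt_nonneg)

lemma partial_tail: "(\<Sum>n<M. u (n + K)) \<le> h (K+1) - h (K+M+1)"
proof (induction M)
  case 0 then show ?case by simp
next
  case (Suc M)
  have "u (M + K) \<le> h (K+M+1) - h (K+M+2)"
    using tele_step[of "K+M+1"] by (simp add: u_F add.commute add.left_commute)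
  then show ?case using Suc by simp
qed

lemma summable_u: "summable u"
proof (rule summableI_nonneg_bounded[where x = "h 1"])
  fix n
  have "(\<Sum>i<n. u (i + 0)) \<le> h (0+1) - h (0+n+1)" by (rule partial_tail)
  then show "(\<Sum>i<n. u i) \<le> h 1" using h_nonneg[of "n+1"] by simp
qed (rule u_nonneg)

lemma a2_eq: "a2 = suminf u" unfolding a2_def u_def by (rule refl)

lemma tail_bound: "0 \<le> a2 - (\<Sum>i<K. u i) \<and> a2 - (\<Sum>i<K. u i) \<le> h (K+1)"
proof -
  have s: "summable (\<lambda>n. u (n + K))" using summable_u by (simp add: summable_iff_shift)
  have e: "a2 - (\<Sum>i<K. u i) = (\<Sum>n. u (n + K))"
    using suminf_split_initial_segment[OF summable_u, of K] a2_eq by simp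
  have "(\<Sum>n. u (n + K)) \<le> h (K+1)"
  proof (rule suminf_le_const[OF s])
    fix n show "(\<Sum>i<n. u (i + K)) \<le> h (K+1)" using partial_tail[where M=n and K=K] h_nonneg[of "K+n+1"] by linarith
  qed
  moreover have "(\<Sum>n. u (n + K)) \<ge> 0" by (intro suminf_nonneg s u_nonneg)
  ultimately show ?thesis using e by simp
qed

lemma ln_lb: assumes "x \<ge> (1::real)" shows "2*((x-1)/(x+1)) + 2*((x-1)/(x+1))^3/3 \<le> ln x"
proof -
  define y where "y = (x-1)/(x+1)"
  have s: "(\<lambda>n. (2*((x - 1) / (x + 1)) ^ (2*n+1) / of_nat (2*n+1))) sums ln x"
    using assms by (intro ln_series_quadratic) auto
  have "(\<Sum>n<2. (2*((x - 1) / (x + 1)) ^ (2*n+1) / of_nat (2*n+1))) \<le> ln x"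
    using sum_le_suminf[OF sums_summable[OF s], of "{..<2}"] sums_unique[OF s] assms by auto
  then have "(\<Sum>n<2. (2*y ^ (2*n+1) / of_nat (2*n+1))) \<le> ln x" unfolding y_def .
  then have "2*y + 2*y^3/3 \<le> ln x" by (simp add: eval_nat_numeral)
  then show ?thesis unfolding y_def .
qed

lemma ln_split: "b > 0 \<Longrightarrow> ln (b::real) = ln (b / 2^k) + real k * ln 2"
  by (simp add: ln_div ln_realpow)

lemma a2_lb: "a2 \<ge> 0.900076"
proof -
  have "(\<Sum>i\<in>{0,1,3,5,9,13}. u i) \<le> (\<Sum>i<14. u i)"
    by (rule sum_mono2) (auto simp: u_nonneg)
  also have "\<dots> \<le> a2" using tail_bound[of 14] by simp
  finally have A: "(\<Sum>i\<in>{0,1,3,5,9,13}. u i) \<le> a2" .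
  have p: "prime (2::nat)" "prime (5::nat)" "prime (17::nat)" "prime (37::nat)" "prime (101::nat)" "prime (197::nat)"
    by code_simp+
  have v: "u n = ln (real ((n+1)^2+1)) / (real (n+1) * real (n+2))" if "prime ((n+1)^2+1)" for n
    unfolding u_alt mangoldt_prime[OF that] ..
  have S: "(\<Sum>i\<in>{0,1,3,5,9,13}. u i) = ln 2 / 2 + ln 5 / 6 + ln 17 / 20 + ln 37 / 42 + ln 101 / 110 + ln 197 / 210"
  proof -
    have q: "prime ((0+1)^2+1::nat)" "prime ((1+1)^2+1::nat)" "prime ((3+1)^2+1::nat)"
      "prime ((5+1)^2+1::nat)" "prime ((9+1)^2+1::nat)" "prime ((13+1)^2+1::nat)" by code_simp+
    show ?thesis using v[OF q(1)] v[OF q(2)] v[OF q(3)] v[OF q(4)] v[OF q(5)] v[OF q(6)] by simp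
  qed
  have l2: "ln (2::real) \<ge> 56/81" using ln_lb[of 2] by (simp add: power3_eq_cube)
  have l5: "ln (5/4::real) \<ge> 488/2187" using ln_lb[of "5/4"] by (simp add: power3_eq_cube)
  have l17: "ln (17/16::real) \<ge> 6536/107811" using ln_lb[of "17/16"] by (simp add: power3_eq_cube)
  have l37: "ln (37/32::real) \<ge> 143080/985527" using ln_lb[of "37/32"] by (simp add: power3_eq_cube)
  have l101: "ln (101/64::real) \<ge> 6145256/13476375" using ln_lb[of "101/64"] by (simp add: power3_eq_cube)
  have l197: "ln (197/128::real) \<ge> 14795256/34328125" using ln_lb[of "197/128"] by (simp add: power3_eq_cube)
  have e5: "ln (5::real) = ln (5/4) + 2 * ln 2" using ln_split[of 5 2] by simp
  have e17: "ln (17::real) = ln (17/16) + 4 * ln 2" using ln_split[of 17 4] by simp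
  have e37: "ln (37::real) = ln (37/32) + 5 * ln 2" using ln_split[of 37 5] by simp
  have e101: "ln (101::real) = ln (101/64) + 6 * ln 2" using ln_split[of 101 6] by simp
  have e197: "ln (197::real) = ln (197/128) + 7 * ln 2" using ln_split[of 197 7] by simp
  have "(900076/1000000::real) \<le> ln 2 / 2 + ln 5 / 6 + ln 17 / 20 + ln 37 / 42 + ln 101 / 110 + ln 197 / 210"
    unfolding e5 e17 e37 e101 e197 add_divide_distrib using l2 l5 l17 l37 l101 l197 by linarith
  then show ?thesis using A S by simp
qed



lemma div_bounds:
  assumes "m > 0"
  shows "real (N div m) \<le> real N / real m" "real N / real m - 1 < real (N div m)"
proof -
  have e0: "N = m * (N div m) + N mod m" by simp
  have e: "real N = real m * real (N div m) + real (N mod m)"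
    by (simp only: of_nat_add[symmetric] of_nat_mult[symmetric] e0[symmetric])
  have r: "real (N mod m) < real m" using assms by simp
  have m: "real m > 0" using assms by simp
  show "real (N div m) \<le> real N / real m" using e m by (simp add: field_simps)
  show "real N / real m - 1 < real (N div m)" using e m r by (simp add: field_simps)
qed

definition c :: "nat \<Rightarrow> nat \<Rightarrow> real" where "c N m = real (N div m) - real (N div Suc m)"

lemma c_nonneg: "m \<ge> 1 \<Longrightarrow> c N m \<ge> 0"
  unfolding c_def by (simp add: div_le_mono2)

lemma c_approx:
  assumes "m \<ge> 1"
  shows "\<bar>c N m - real N / (real m * real (m+1))\<bar> \<le> 1"
proof -
  have m: "real m > 0" using assms by simp
  have e: "real N / (real m * real (m+1)) = real N / real m - real N / real (Suc m)"
    using m by (simp add: field_simps)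
  show ?thesis unfolding e c_def
    using div_bounds[of m N] div_bounds[of "Suc m" N] assms by auto
qed

definition T :: "nat \<Rightarrow> real" where "T N = (\<Sum>n\<in>{1..N}. F (N div n))"

lemma card_level:
  assumes "m \<ge> 1"
  shows "card {n\<in>{1..N}. N div n = m} = N div m - N div Suc m"
proof -
  have "{n\<in>{1..N}. N div n = m} = {N div Suc m<..N div m}"
  proof (intro equalityI subsetI)
    fix n assume n: "n \<in> {n\<in>{1..N}. N div n = m}"
    then have n1: "n \<ge> 1" "N div n = m" by auto
    have n0: "n > 0" using n1 by simp
    have "m * n \<le> N" using div_times_less_eq_dividend[of N n] n1(2) by simp
    then have a: "n \<le> N div m" using assms by (simp add: less_eq_div_iff_mult_less_eq mult.commute)
    have "\<not> (Suc m * n \<le> N)"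
    proof
      assume "Suc m * n \<le> N"
      then have "Suc m \<le> N div n" using less_eq_div_iff_mult_less_eq[OF n0] by blast
      then show False using n1 by simp
    qed
    then have b: "N div Suc m < n" by (simp add: less_eq_div_iff_mult_less_eq mult.commute not_le[symmetric])
    show "n \<in> {N div Suc m<..N div m}" using a b by simp
  next
    fix n assume n: "n \<in> {N div Suc m<..N div m}"
    then have a: "n \<le> N div m" and b: "N div Suc m < n" by auto
    have n1: "n \<ge> 1" using b by simp
    have n0: "n > 0" using n1 by simp
    have mn: "m * n \<le> N" using a assms by (simp add: less_eq_div_iff_mult_less_eq mult.commute)
    have "1 * n \<le> m * n" using assms by (rule mult_le_mono1)
    then have "n \<le> N" using mn by linarith
    have nm: "\<not> Suc m * n \<le> N" using b by (simp add: less_eq_div_iff_mult_less_eq mult.commute not_le[symmetric])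
    have "m \<le> N div n" using mn n0 by (simp add: less_eq_div_iff_mult_less_eq)
    moreover have "\<not> Suc m \<le> N div n" using nm n0 by (simp add: less_eq_div_iff_mult_less_eq)
    ultimately have "N div n = m" by simp
    then show "n \<in> {n\<in>{1..N}. N div n = m}" using n1 \<open>n \<le> N\<close> by simp
  qed
  then show ?thesis by simp
qed

lemma T_eq: "T N = (\<Sum>m\<in>{1..N}. F m * c N m)"
proof -
  have "T N = (\<Sum>n\<in>{1..N}. \<Sum>m\<in>{1..N}. if N div n = m then F m else 0)"
    unfolding T_def
  proof (intro sum.cong refl)
    fix n assume n: "n \<in> {1..N}"
    have "0 < N div n" using n by (simp add: div_greater_zero_iff)
    then have "N div n \<in> {1..N}" by (simp add: div_le_dividend)
    then show "F (N div n) = (\<Sum>m\<in>{1..N}. if N div n = m then F m else 0)" by simp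
  qed
  also have "\<dots> = (\<Sum>m\<in>{1..N}. \<Sum>n\<in>{1..N}. if N div n = m then F m else 0)"
    by (rule sum.swap)
  also have "\<dots> = (\<Sum>m\<in>{1..N}. F m * c N m)"
  proof (intro sum.cong refl)
    fix m assume m: "m \<in> {1..N}"
    have "(\<Sum>n\<in>{1..N}. if N div n = m then F m else 0) = (\<Sum>n\<in>{n\<in>{1..N}. N div n = m}. F m)"
      using sum.inter_filter[of "{1..N}" "\<lambda>n. F m" "\<lambda>n. N div n = m"] by simp
    also have "\<dots> = F m * real (N div m - N div Suc m)"
      using card_level[of m N] m by simp
    also have "\<dots> = F m * c N m" unfolding c_def using div_le_mono2[of m "Suc m" N] m by (simp add: of_nat_diff)
    finally show "(\<Sum>n\<in>{1..N}. if N div n = m then F m else 0) = F m * c N m" .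
  qed
  finally show ?thesis .
qed



lemma main_nat:
  assumes N1: "N \<ge> 1"
  shows "\<bar>T N - a2 * real N\<bar> \<le> sqrt (real N) * (6 * ln (real N + 1) + 4)"
proof -
  define K where "K = nat \<lfloor>sqrt (real N)\<rfloor>"
  define L where "L = ln (real N + 1)"
  define s where "s = sqrt (real N)"
  have s1: "s \<ge> 1" unfolding s_def using N1 by simp
  have ss: "s * s = real N" unfolding s_def by simp
  have fl: "real_of_int \<lfloor>s\<rfloor> \<le> s" "s < real_of_int \<lfloor>s\<rfloor> + 1" by linarith+
  have fl0: "\<lfloor>s\<rfloor> \<ge> 1" using s1 by linarith
  have Kr: "real K = real_of_int \<lfloor>s\<rfloor>" unfolding K_def s_def[symmetric] using fl0 by simp
  have K1: "real K \<le> s" "s < real K + 1" using fl Kr by auto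
  have Kge: "K \<ge> 1" using fl0 K_def s_def by linarith
  have sN: "s \<le> real N" using ss s1 mult_left_mono[of 1 s s] by simp
  have KN: "K \<le> N" using K1 sN by linarith
  have L0: "L \<ge> 0" unfolding L_def by simp
  have NK: "real N / (real K + 1) \<le> s"
  proof -
    have "real N \<le> s * (real K + 1)" using ss K1 s1 mult_left_mono[of s "real K + 1" s] by simp
    then show ?thesis by (simp add: field_simps)
  qed
  have lnK: "ln (real K + 1) \<le> L" unfolding L_def using KN by simp
  have FL: "F m \<le> 2 * L" if "m \<le> N" for m
  proof -
    have "F m \<le> 2 * ln (real m + 1)" by (rule F_le)
    also have "\<dots> \<le> 2 * L" unfolding L_def using that by simp
    finally show ?thesis .
  qed
  define A where "A = (\<Sum>m\<in>{1..K}. F m * c N m)"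
  define B where "B = (\<Sum>m\<in>{Suc K..N}. F m * c N m)"
  define P where "P = (\<Sum>i<K. u i)"
  have TAB: "T N = A + B"
  proof -
    have "{1..N} = {1..K} \<union> {Suc K..N}" using KN by auto
    then show ?thesis unfolding T_eq A_def B_def by (simp add: sum.union_disjoint)
  qed
  have P_eq: "P = (\<Sum>m\<in>{1..K}. F m / (real m * real (m+1)))"
    unfolding P_def using sum.atLeast1_atMost_eq[of "\<lambda>m. F m / (real m * real (m+1))" K]
    by (simp add: u_F)
  have A_bound: "\<bar>A - real N * P\<bar> \<le> real K * (2 * L)"
  proof -
    have "A - real N * P = (\<Sum>m\<in>{1..K}. F m * (c N m - real N / (real m * real (m+1))))"
      unfolding A_def P_eq sum_distrib_left by (simp add: sum_subtractf[symmetric] algebra_simps)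
    also have "\<bar>\<dots>\<bar> \<le> (\<Sum>m\<in>{1..K}. \<bar>F m * (c N m - real N / (real m * real (m+1)))\<bar>)"
      by (rule sum_abs)
    also have "\<dots> \<le> (\<Sum>m\<in>{1..K}. 2 * L)"
    proof (rule sum_mono)
      fix m assume m: "m \<in> {1..K}"
      have "\<bar>F m * (c N m - real N / (real m * real (m+1)))\<bar> = F m * \<bar>c N m - real N / (real m * real (m+1))\<bar>"
        using F_nonneg[of m] by (simp add: abs_mult)
      also have "\<dots> \<le> F m * 1" using c_approx[of m N] m F_nonneg[of m] by (intro mult_left_mono) auto
      also have "\<dots> \<le> 2 * L" using FL[of m] m KN by simp
      finally show "\<bar>F m * (c N m - real N / (real m * real (m+1)))\<bar> \<le> 2 * L" .
    qed
    also have "\<dots> = real K * (2 * L)" by simp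
    finally show ?thesis .
  qed
  have B0: "B \<ge> 0" unfolding B_def
    by (intro sum_nonneg mult_nonneg_nonneg F_nonneg c_nonneg) auto
  have B1: "B \<le> 2 * L * s"
  proof -
    have "B \<le> (\<Sum>m\<in>{Suc K..N}. 2 * L * c N m)" unfolding B_def
      using FL c_nonneg by (intro sum_mono mult_right_mono) auto
    also have "\<dots> = 2 * L * (\<Sum>m\<in>{Suc K..N}. c N m)" by (simp add: sum_distrib_left)
    also have "(\<Sum>m\<in>{Suc K..N}. c N m) = (\<Sum>m\<in>{Suc K..N}. (\<lambda>i. - real (N div i)) (Suc m) - (\<lambda>i. - real (N div i)) m)"
      unfolding c_def by simp
    also have "\<dots> = real (N div Suc K) - real (N div Suc N)"
      using KN by (subst sum_Suc_diff) auto
    also have "\<dots> = real (N div Suc K)" by simp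
    also have "\<dots> \<le> real N / (real K + 1)" using div_bounds(1)[of "Suc K" N] by (simp add: add.commute)
    also have "\<dots> \<le> s" by (rule NK)
    finally show ?thesis using L0 by (simp add: mult_left_mono)
  qed
  have tail: "0 \<le> a2 - P" "a2 - P \<le> h (K+1)" using tail_bound[of K] unfolding P_def by auto
  have Ntail: "real N * (a2 - P) \<le> 2 * (2 + L) * s"
  proof -
    have "real N * (a2 - P) \<le> real N * h (K+1)" using tail by (intro mult_left_mono) auto
    also have "\<dots> = 2 * (2 + ln (real K + 1)) * (real N / (real K + 1))"
      unfolding h_def by (simp add: add.commute)
    also have "\<dots> \<le> 2 * (2 + L) * s"
      using lnK NK L0 by (intro mult_mono) auto
    finally show ?thesis .
  qed
  have KL: "real K * (2 * L) \<le> s * (2 * L)" using K1 L0 by (intro mult_right_mono) auto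
  have N0: "real N * (a2 - P) \<ge> 0" using tail by simp
  have "T N - a2 * real N = (A - real N * P) + B - real N * (a2 - P)"
    using TAB by (simp add: algebra_simps)
  then have "\<bar>T N - a2 * real N\<bar> \<le> \<bar>A - real N * P\<bar> + B + real N * (a2 - P)"
    using B0 N0 by linarith
  also have "\<dots> \<le> s * (6 * L + 4)" using A_bound B1 Ntail KL by (simp add: algebra_simps)
  finally show ?thesis unfolding s_def L_def .
qed



lemma sum_eq_T:
  assumes "x \<ge> (1::real)"
  shows "(\<Sum>n = 1..nat \<lfloor>x\<rfloor>. mangoldt ((nat \<lfloor>x / real n\<rfloor>)^2 + 1)) = T (nat \<lfloor>x\<rfloor>)"
  unfolding T_def F_def
proof (intro sum.cong refl)
  fix n assume n: "n \<in> {1..nat \<lfloor>x\<rfloor>}"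
  have "\<lfloor>x / real n\<rfloor> = \<lfloor>x / real_of_int (int n)\<rfloor>" by simp
  also have "\<dots> = \<lfloor>x\<rfloor> div int n" by (rule floor_divide_real_eq_div) simp
  finally have "nat \<lfloor>x / real n\<rfloor> = nat \<lfloor>x\<rfloor> div n"
    using assms by (simp add: nat_div_distrib)
  then show "mangoldt ((nat \<lfloor>x / real n\<rfloor>)^2 + 1) = mangoldt ((nat \<lfloor>x\<rfloor> div n)^2 + 1)" by simp
qed

lemma real_bound:
  assumes x: "x \<ge> (1::real)"
  shows "\<bar>(\<Sum>n = 1..nat \<lfloor>x\<rfloor>. mangoldt ((nat \<lfloor>x / real n\<rfloor>)^2 + 1)) - a2 * x\<bar>
     \<le> sqrt x * (6 * ln (x + 1) + 4) + \<bar>a2\<bar>"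
proof -
  define N where "N = nat \<lfloor>x\<rfloor>"
  have N1: "N \<ge> 1" unfolding N_def using x by linarith
  have Nx: "real N \<le> x" "x < real N + 1" unfolding N_def using x by linarith+
  have m: "\<bar>T N - a2 * real N\<bar> \<le> sqrt (real N) * (6 * ln (real N + 1) + 4)" by (rule main_nat[OF N1])
  have "sqrt (real N) * (6 * ln (real N + 1) + 4) \<le> sqrt x * (6 * ln (x + 1) + 4)"
    using Nx N1 by (intro mult_mono) auto
  moreover have "\<bar>a2 * x - a2 * real N\<bar> \<le> \<bar>a2\<bar>"
  proof -
    have "\<bar>a2 * x - a2 * real N\<bar> = \<bar>a2\<bar> * \<bar>x - real N\<bar>" by (simp add: abs_mult[symmetric] algebra_simps)
    also have "\<dots> \<le> \<bar>a2\<bar> * 1" using Nx by (intro mult_left_mono) auto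
    finally show ?thesis by simp
  qed
  ultimately show ?thesis using m sum_eq_T[OF x] unfolding N_def[symmetric] by linarith
qed

lemma final_O:
  assumes "\<epsilon> > (0::real)"
  shows "(\<lambda>x::real. (\<Sum>n = 1..nat \<lfloor>x\<rfloor>. mangoldt ((nat \<lfloor>x / real n\<rfloor>)^2 + 1)) - a2 * x)
        \<in> O(\<lambda>x. x powr ((2 + \<epsilon>) / 3) * (ln x)^2)"
proof -
  define b where "b = (\<lambda>x::real. sqrt x * (6 * ln (x + 1) + 4) + \<bar>a2\<bar>)"
  have 1: "(\<lambda>x::real. (\<Sum>n = 1..nat \<lfloor>x\<rfloor>. mangoldt ((nat \<lfloor>x / real n\<rfloor>)^2 + 1)) - a2 * x) \<in> O(b)"
  proof (rule bigoI[where c = 1])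
    show "\<forall>\<^sub>F x in at_top. norm ((\<Sum>n = 1..nat \<lfloor>x\<rfloor>. mangoldt ((nat \<lfloor>x / real n\<rfloor>)^2 + 1)) - a2 * x) \<le> 1 * norm (b x)"
      using eventually_ge_at_top[of "1::real"]
    proof eventually_elim
      case (elim x)
      have "0 \<le> sqrt x * (6 * ln (x + 1) + 4)" using elim by simp
      then show ?case using real_bound[OF elim] unfolding b_def by simp
    qed
  qed
  have 2: "(\<lambda>x::real. sqrt x * (6 * ln (x + 1) + 4)) \<in> O(\<lambda>x. x powr (2/3) * (ln x)^2)"
    by real_asymp
  have 3: "(\<lambda>x::real. \<bar>a2\<bar>) \<in> O(\<lambda>x. x powr (2/3) * (ln x)^2)"
  proof -
    have "(\<lambda>x::real. \<bar>a2\<bar>) \<in> O(\<lambda>x. 1)" by simp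
    also have "(\<lambda>x::real. 1) \<in> O(\<lambda>x. x powr (2/3) * (ln x)^2)" by real_asymp
    finally show ?thesis .
  qed
  have 4: "b \<in> O(\<lambda>x. x powr (2/3) * (ln x)^2)" unfolding b_def using 2 3 by (rule sum_in_bigo)
  have 5: "(\<lambda>x::real. x powr (2/3) * (ln x)^2) \<in> O(\<lambda>x. x powr ((2 + \<epsilon>) / 3) * (ln x)^2)"
  proof (rule bigoI[where c = 1])
    show "\<forall>\<^sub>F x in at_top. norm (x powr (2/3) * (ln x)^2) \<le> 1 * norm (x powr ((2 + \<epsilon>) / 3) * (ln x)^2)"
      using eventually_ge_at_top[of "1::real"]
    proof eventually_elim
      case (elim x)
      have "x powr (2/3) \<le> x powr ((2 + \<epsilon>) / 3)" using elim assms by (intro powr_mono) auto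
      then show ?case using elim by (auto simp: abs_mult intro!: mult_right_mono)
    qed
  qed
  show ?thesis using 1 4 5 by (meson landau_o.big_trans)
qed


theorem theorem1p3:
  fixes \<epsilon> :: real
  assumes "\<epsilon> > 0"
  shows "summable (\<lambda>n. mangoldt ((Suc n)^2 + 1) / (real (Suc n) * real (Suc n + 1)))
    \<and> a2 \<ge> 0.900076
    \<and> (\<lambda>x::real. (\<Sum>n = 1..nat \<lfloor>x\<rfloor>. mangoldt ((nat \<lfloor>x / real n\<rfloor>)^2 + 1)) - a2 * x)
        \<in> O(\<lambda>x. x powr ((2 + \<epsilon>) / 3) * (ln x)^2)"
proof (intro conjI)
  show "summable (\<lambda>n. mangoldt ((Suc n)^2 + 1) / (real (Suc n) * real (Suc n + 1)))"
    using summable_u unfolding u_def .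
  show "a2 \<ge> 0.900076" by (rule a2_lb)
  show "(\<lambda>x::real. (\<Sum>n = 1..nat \<lfloor>x\<rfloor>. mangoldt ((nat \<lfloor>x / real n\<rfloor>)^2 + 1)) - a2 * x)
        \<in> O(\<lambda>x. x powr ((2 + \<epsilon>) / 3) * (ln x)^2)" by (rule final_O[OF assms])
qed

end
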